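(* For $n$ complex alternating matrices $A_1,\ldots,A_n$ of size $n$ and $n-1$ complex symmetric matrices $B_1,\ldots,B_{n-1}$ of size $n$, we have $$\sum_{\sigma\in S_n,\ \tau\in S_{n-1}}\operatorname{sgn}(\sigma)\operatorname{sgn}(\tau)\,A_{\sigma(1)}B_{\tau(1)}A_{\sigma(2)}B_{\tau(2)}\cdots A_{\sigma(n-1)}B_{\tau(n-1)}A_{\sigma(n)}=0.$$
   Context: A matrix $M$ is alternating if ${}^tM=-M$ and symmetric if ${}^tM=M$. *)

theory Defs
  imports "Jordan_Normal_Form.Matrix" "HOL-Combinatorics.Permutations"
begin

definition alternating_mat :: "'a::ring mat \<Rightarrow> bool" where
  "alternating_mat M \<longleftrightarrow> transpose_mat M = - M"

definition symmetric_mat :: "'a::ring mat \<Rightarrow> bool" where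
  "symmetric_mat M \<longleftrightarrow> transpose_mat M = M"

text \<open>Alternating product (0-indexed)
  A (s 0) * B (t 0) * A (s 1) * B (t 1) * ... * B (t (n-2)) * A (s (n-1)).\<close>
definition alt_word :: "(nat \<Rightarrow> 'a::semiring_1 mat) \<Rightarrow> (nat \<Rightarrow> 'a mat) \<Rightarrow>
    (nat \<Rightarrow> nat) \<Rightarrow> (nat \<Rightarrow> nat) \<Rightarrow> nat \<Rightarrow> 'a mat" where
  "alt_word A B s t n = foldr (\<lambda>i M. A (s i) * B (t i) * M) [0..<n-1] (A (s (n-1)))"

end

theory Submission
  imports Defs "Jordan_Normal_Form.Determinant" "HOL-Combinatorics.Cycles" "HOL-Combinatorics.Orbits" "HOL-Library.FuncSet"
begin


definition bf :: "nat \<Rightarrow> complex mat \<Rightarrow> (nat \<Rightarrow> complex) \<Rightarrow> (nat \<Rightarrow> complex) \<Rightarrow> complex" where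
  "bf n M x y = (\<Sum>a<n. \<Sum>b<n. x a * M $$ (a,b) * y b)"

lemma bf_antisym:
  assumes "M \<in> carrier_mat n n" "transpose_mat M = - M"
  shows "bf n M y x = - bf n M x y"
proof -
  have e: "M $$ (b,a) = - M $$ (a,b)" if "a < n" "b < n" for a b
  proof -
    have "transpose_mat M $$ (a,b) = (- M) $$ (a,b)" by (simp only: assms(2))
    thus ?thesis using that assms(1) by simp
  qed
  have "bf n M y x = (\<Sum>a<n. \<Sum>b<n. y a * M $$ (a,b) * x b)" by (simp add: bf_def)
  also have "\<dots> = (\<Sum>b<n. \<Sum>a<n. y a * M $$ (a,b) * x b)" by (rule sum.swap)
  also have "\<dots> = (\<Sum>b<n. \<Sum>a<n. - (x b * M $$ (b,a) * y a))"
  proof (intro sum.cong refl)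
    fix b a assume "b \<in> {..<n}" "a \<in> {..<n}"
    then have "M $$ (a,b) = - M $$ (b,a)" using e[of b a] by simp
    then show "y a * M $$ (a,b) * x b = - (x b * M $$ (b,a) * y a)" by simp
  qed
  also have "\<dots> = - bf n M x y" by (simp add: bf_def sum_negf)
  finally show ?thesis .
qed

lemma bf_self_zero:
  assumes "M \<in> carrier_mat n n" "transpose_mat M = - M"
  shows "bf n M x x = 0"
  using bf_antisym[OF assms, of x x] by simp

definition MM :: "nat \<Rightarrow> (nat \<Rightarrow> complex mat) \<Rightarrow> (nat \<Rightarrow> nat \<Rightarrow> complex) \<Rightarrow> (nat \<Rightarrow> nat) \<Rightarrow> complex mat" where
  "MM n A w p = mat n n (\<lambda>(r,m). bf n (A m) (w r) (w (p r)))"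

lemma MM_carrier[simp]: "MM n A w p \<in> carrier_mat n n" by (simp add: MM_def)

lemma det_scale_perm_rows:
  assumes B: "B \<in> carrier_mat n n" and p: "p permutes {0..<n}"
  shows "det (mat n n (\<lambda>(r,m). s r * B $$ (p r, m))) = prod s {0..<n} * (of_int (sign p) * det B)"
proof -
  let ?X = "mat n n (\<lambda>(r,m). B $$ (p r, m))"
  have X: "?X \<in> carrier_mat n n" by simp
  have "det (mat n n (\<lambda>(r,m). s r * B $$ (p r, m))) = prod s {0..<n} * det ?X"
  proof -
    have C: "mat n n (\<lambda>(r,m). s r * B $$ (p r, m)) \<in> carrier_mat n n" by simp
    show ?thesis unfolding det_def'[OF C] det_def'[OF X] sum_distrib_left
    proof (rule sum.cong[OF refl])
      fix q assume q: "q \<in> {q. q permutes {0..<n}}"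
      have "(\<Prod>i = 0..<n. mat n n (\<lambda>(r,m). s r * B $$ (p r, m)) $$ (i, q i))
          = (\<Prod>i = 0..<n. s i * ?X $$ (i, q i))"
        by (rule prod.cong, insert q, auto simp: permutes_in_image)
      also have "\<dots> = prod s {0..<n} * (\<Prod>i = 0..<n. ?X $$ (i, q i))" by (simp add: prod.distrib)
      finally show "signof q * (\<Prod>i = 0..<n. mat n n (\<lambda>(r,m). s r * B $$ (p r, m)) $$ (i, q i))
          = prod s {0..<n} * (signof q * (\<Prod>i = 0..<n. ?X $$ (i, q i)))" by simp
    qed
  qed
  also have "det ?X = of_int (sign p) * det B" by (rule det_permute_rows[OF B p])
  finally show ?thesis .
qed

lemma sign_cycle_of_list:
  "distinct cs \<Longrightarrow> sign (cycle_of_list cs) = (-1) ^ (length cs - 1)"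
proof (induct cs rule: cycle_of_list.induct)
  case (1 i j cs)
  have "sign (cycle_of_list (i # j # cs)) = sign (transpose i j \<circ> cycle_of_list (j # cs))" by simp
  also have "\<dots> = sign (transpose i j) * sign (cycle_of_list (j # cs))"
    by (rule sign_compose) (auto simp: permutation_of_cycle permutation_swap_id)
  also have "\<dots> = - ((-1) ^ (length (j # cs) - 1))" using 1 by (simp add: sign_swap_id)
  also have "\<dots> = (-1) ^ (length (i # j # cs) - 1)" by simp
  finally show ?case .
qed (auto simp: sign_id)

lemma perm_restrict_orbit_cycle:
  assumes "permutation f"
  shows "perm_restrict f (orbit f a) = cycle_of_list (support f a)"
proof -
  have set: "set (support f a) = orbit f a"
    using support_set[OF assms, of a] orbit_altdef_permutation[OF assms, of a] by auto
  show ?thesis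
  proof
    fix x show "perm_restrict f (orbit f a) x = cycle_of_list (support f a) x"
    proof (cases "x \<in> orbit f a")
      case True thus ?thesis using cycle_restrict[OF assms, of x a] set by (simp add: perm_restrict_simps)
    next
      case False thus ?thesis using id_outside_supp[of x "support f a"] set by (simp add: perm_restrict_simps)
    qed
  qed
qed

lemma sign_perm_restrict_orbit:
  assumes "permutation f"
  shows "sign (perm_restrict f (orbit f a)) = (-1) ^ (card (orbit f a) - 1)"
proof -
  have set: "set (support f a) = orbit f a"
    using support_set[OF assms, of a] orbit_altdef_permutation[OF assms, of a] by auto
  have d: "distinct (support f a)" by (rule cycle_of_permutation[OF assms])
  have "card (orbit f a) = length (support f a)" using distinct_card[OF d] set by simp
  thus ?thesis unfolding perm_restrict_orbit_cycle[OF assms] using sign_cycle_of_list[OF d] by simp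
qed

section \<open>Reversal of a cycle\<close>

definition revc :: "(nat \<Rightarrow> nat) \<Rightarrow> nat \<Rightarrow> nat \<Rightarrow> nat" where
  "revc p a = (\<lambda>x. if x \<in> orbit p a then Hilbert_Choice.inv p x else p x)"

context
  fixes p :: "nat \<Rightarrow> nat" and S :: "nat set" and a :: nat
  assumes p: "p permutes S" and fS: "finite S" and aS: "a \<in> S"
begin

private lemma perm: "permutation p" using p fS by (auto simp: permutation_permutes)
private lemma perm_inv: "permutation (Hilbert_Choice.inv p)" using perm by (simp add: permutation_inverse)

lemma orbit_inv_p: "orbit (Hilbert_Choice.inv p) a = orbit p a" by (rule orbit_inv_eq[OF perm])

lemma orbit_closed: "x \<in> orbit p a \<Longrightarrow> p x \<in> orbit p a"
  by (rule orbit.step)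

lemma orbit_closed_inv: "x \<in> orbit p a \<Longrightarrow> Hilbert_Choice.inv p x \<in> orbit p a"
  using orbit.step[of x "Hilbert_Choice.inv p" a] orbit_inv_p by auto

lemma orbit_sub: "orbit p a \<subseteq> S" by (rule permutes_orbit_subset[OF p aS])

lemma a_in_orbit: "a \<in> orbit p a" by (rule permutation_self_in_orbit[OF perm])

lemma finite_orbit_p: "finite (orbit p a)" using orbit_sub fS finite_subset by auto

definition rho where "rho = perm_restrict (Hilbert_Choice.inv p) (orbit p a)"

lemma rho_permutes: "rho permutes (orbit p a)"
proof (rule bij_imp_permutes)
  show "bij_betw rho (orbit p a) (orbit p a)"
  proof (rule bij_betw_byWitness[where f'="perm_restrict p (orbit p a)"])
    show "\<forall>x\<in>orbit p a. perm_restrict p (orbit p a) (rho x) = x"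
      using orbit_closed_inv by (auto simp: rho_def perm_restrict_simps permutes_inverses(1)[OF p])
    show "\<forall>x\<in>orbit p a. rho (perm_restrict p (orbit p a) x) = x"
      using orbit_closed by (auto simp: rho_def perm_restrict_simps permutes_inverses(2)[OF p])
    show "rho ` orbit p a \<subseteq> orbit p a" using orbit_closed_inv by (auto simp: rho_def perm_restrict_simps)
    show "perm_restrict p (orbit p a) ` orbit p a \<subseteq> orbit p a" using orbit_closed by (auto simp: perm_restrict_simps)
  qed
  show "rho x = x" if "x \<notin> orbit p a" for x using that by (simp add: rho_def perm_restrict_simps)
qed

lemma sign_rho: "sign rho = (-1) ^ (card (orbit p a) - 1)"
  using sign_perm_restrict_orbit[OF perm_inv, of a] orbit_inv_p by (simp add: rho_def)

lemma revc_eq: "revc p a = p \<circ> rho \<circ> rho"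
proof
  fix x show "revc p a x = (p \<circ> rho \<circ> rho) x"
  proof (cases "x \<in> orbit p a")
    case True
    then have "Hilbert_Choice.inv p x \<in> orbit p a" by (rule orbit_closed_inv)
    then show ?thesis using True by (simp add: revc_def rho_def perm_restrict_simps permutes_inverses(1)[OF p])
  next
    case False thus ?thesis by (simp add: revc_def rho_def perm_restrict_simps)
  qed
qed

lemma rho_permutes_S: "rho permutes S" using permutes_subset[OF rho_permutes orbit_sub] .

lemma revc_permutes: "revc p a permutes S"
  unfolding revc_eq by (intro permutes_compose rho_permutes_S p)

lemma sign_revc: "sign (revc p a) = sign p"
proof -
  have pr: "permutation rho" using rho_permutes_S fS by (auto simp: permutation_permutes)
  have pc: "permutation (p \<circ> rho)" by (rule permutation_compose[OF perm pr])
  have "sign (revc p a) = sign (p \<circ> rho) * sign rho"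
    unfolding revc_eq by (rule sign_compose[OF pc pr])
  also have "\<dots> = sign p * (sign rho * sign rho)" by (simp add: sign_compose[OF perm pr])
  finally show ?thesis by simp
qed

lemma revc_in: "x \<in> orbit p a \<Longrightarrow> revc p a x = Hilbert_Choice.inv p x" by (simp add: revc_def)
lemma revc_out: "x \<notin> orbit p a \<Longrightarrow> revc p a x = p x" by (simp add: revc_def)

lemma orbit_revc_same: "orbit (revc p a) a = orbit p a"
proof -
  have "orbit (revc p a) a = orbit (Hilbert_Choice.inv p) a"
  proof (rule orbit_cong)
    show "a \<in> orbit (Hilbert_Choice.inv p) a" by (rule permutation_self_in_orbit[OF perm_inv])
    show "revc p a s = Hilbert_Choice.inv p s" if "s \<in> orbit (Hilbert_Choice.inv p) a" for s
      using that orbit_inv_p revc_in by simp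
  qed
  thus ?thesis using orbit_inv_p by simp
qed

lemma orbit_disjoint: "x \<notin> orbit p a \<Longrightarrow> orbit p x \<inter> orbit p a = {}"
proof (rule ccontr)
  assume x: "x \<notin> orbit p a" and "orbit p x \<inter> orbit p a \<noteq> {}"
  then obtain y where y1: "y \<in> orbit p x" and y2: "y \<in> orbit p a" by auto
  have "x \<in> orbit p y" by (rule orbit_swap[OF permutation_self_in_orbit[OF perm] y1])
  hence "x \<in> orbit p a" by (rule orbit_trans[OF _ y2])
  with x show False by simp
qed

lemma orbit_revc_other: "x \<notin> orbit p a \<Longrightarrow> orbit (revc p a) x = orbit p x"
proof (rule orbit_cong[OF permutation_self_in_orbit[OF perm]])
  fix s assume "x \<notin> orbit p a" "s \<in> orbit p x"
  then have "s \<notin> orbit p a" using orbit_disjoint by blast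
  then show "revc p a s = p s" by (rule revc_out)
qed

lemma revc_revc: "revc (revc p a) a = p"
proof
  fix x
  let ?q = "revc p a"
  have qS: "?q permutes S" by (rule revc_permutes)
  show "revc ?q a x = p x"
  proof (cases "x \<in> orbit p a")
    case True
    have px: "p x \<in> orbit p a" using True by (rule orbit_closed)
    have "?q (p x) = x" using px by (simp add: revc_in permutes_inverses(2)[OF p])
    hence "Hilbert_Choice.inv ?q x = p x" using permutes_inv_eq[OF qS] by blast
    thus ?thesis using True orbit_revc_same by (simp add: revc_def)
  next
    case False thus ?thesis using orbit_revc_same by (simp add: revc_def revc_out)
  qed
qed

end



lemma involution_sum_zero:
  fixes f :: "'b \<Rightarrow> complex"
  assumes "finite X" "\<And>x. x \<in> X \<Longrightarrow> h x \<in> X" "\<And>x. x \<in> X \<Longrightarrow> h (h x) = x"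
    "\<And>x. x \<in> X \<Longrightarrow> f (h x) = - f x"
  shows "sum f X = 0"
proof -
  have "sum (\<lambda>x. - f x) X = sum f X"
    by (rule sum.reindex_bij_witness[where i=h and j=h]) (auto simp: assms)
  hence "- sum f X = sum f X" by (simp add: sum_negf)
  thus ?thesis by simp
qed

lemma det_MM_revc:
  assumes p: "p permutes {0..<Suc n}" and a: "a \<le> n" and nO: "n \<notin> orbit p a"
    and Ac: "\<And>k. k < n \<Longrightarrow> A k \<in> carrier_mat n n"
    and At: "\<And>k. k < n \<Longrightarrow> transpose_mat (A k) = - A k"
  shows "det (MM n A w (revc p a)) = - det (MM n A w p)"
proof -
  let ?O = "orbit p a"
  have fS: "finite {0..<Suc n}" by simp
  have aS: "a \<in> {0..<Suc n}" using a by simp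
  have Osub: "?O \<subseteq> {0..<n}"
  proof
    fix x assume x: "x \<in> ?O"
    hence "x < Suc n" using orbit_sub[OF p fS aS] by auto
    moreover have "x \<noteq> n" using x nO by auto
    ultimately show "x \<in> {0..<n}" by simp
  qed
  have rp: "rho p a permutes {0..<n}" by (rule permutes_subset[OF rho_permutes[OF p fS aS] Osub])
  have aO: "a \<in> ?O" by (rule a_in_orbit[OF p fS aS])
  have fO: "finite ?O" using Osub finite_subset by auto
  have cO: "card ?O \<ge> 1" using aO fO by (metis One_nat_def Suc_leI card_gt_0_iff empty_iff)
  define s where "s = (\<lambda>r::nat. if r \<in> ?O then (-1::complex) else 1)"
  have eq: "MM n A w (revc p a) = mat n n (\<lambda>(r,m). s r * MM n A w p $$ (rho p a r, m))"
  proof (rule eq_matI)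
    fix r m assume r: "r < dim_row (mat n n (\<lambda>(r,m). s r * MM n A w p $$ (rho p a r, m)))"
      and m: "m < dim_col (mat n n (\<lambda>(r,m). s r * MM n A w p $$ (rho p a r, m)))"
    from r m have r: "r < n" and m: "m < n" by auto
    show "MM n A w (revc p a) $$ (r, m) = mat n n (\<lambda>(r,m). s r * MM n A w p $$ (rho p a r, m)) $$ (r, m)"
    proof (cases "r \<in> ?O")
      case True
      have ir: "Hilbert_Choice.inv p r \<in> ?O" by (rule orbit_closed_inv[OF p fS aS True])
      hence irn: "Hilbert_Choice.inv p r < n" using Osub by auto
      have rho: "rho p a r = Hilbert_Choice.inv p r" using True by (simp add: rho_def[OF p fS aS] perm_restrict_simps)
      have pir: "p (Hilbert_Choice.inv p r) = r" by (rule permutes_inverses(1)[OF p])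
      have "MM n A w (revc p a) $$ (r, m) = bf n (A m) (w r) (w (Hilbert_Choice.inv p r))"
        using r m True by (simp add: MM_def revc_in[OF p fS aS])
      also have "\<dots> = - bf n (A m) (w (Hilbert_Choice.inv p r)) (w r)"
        by (rule bf_antisym[OF Ac[OF m] At[OF m]])
      also have "\<dots> = s r * MM n A w p $$ (rho p a r, m)"
        using True irn m by (simp add: s_def rho MM_def pir)
      finally show ?thesis using r m by simp
    next
      case False
      have rho: "rho p a r = r" using False by (simp add: rho_def[OF p fS aS] perm_restrict_simps)
      show ?thesis using r m False by (simp add: MM_def revc_out[OF p fS aS] s_def rho)
    qed
  qed (auto simp: MM_def)
  have ps: "prod s {0..<n} = (-1) ^ card ?O"
  proof -
    have "prod s {0..<n} = (\<Prod>r\<in>{0..<n} \<inter> {r. r \<in> ?O}. -1) * (\<Prod>r\<in>{0..<n} \<inter> - {r. r \<in> ?O}. 1)"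
      unfolding s_def by (rule prod.If_cases) simp
    also have "{0..<n} \<inter> {r. r \<in> ?O} = ?O" using Osub by auto
    finally show ?thesis by simp
  qed
  have "det (MM n A w (revc p a)) = prod s {0..<n} * (of_int (sign (rho p a)) * det (MM n A w p))"
    unfolding eq by (rule det_scale_perm_rows[OF MM_carrier rp])
  also have "\<dots> = (-1) ^ card ?O * (-1) ^ (card ?O - 1) * det (MM n A w p)"
    unfolding ps sign_rho[OF p fS aS] by simp
  also have "(-1::complex) ^ card ?O * (-1) ^ (card ?O - 1) = -1"
  proof -
    have "card ?O = Suc (card ?O - 1)" using cO by simp
    then have "(-1::complex) ^ card ?O = - ((-1) ^ (card ?O - 1))" by (metis power_Suc mult_minus1)
    then show ?thesis by (simp flip: power_add add: power_add[symmetric])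
  qed
  finally show ?thesis by simp
qed

lemma PR_zero:
  assumes n1: "n \<ge> 1"
    and Ac: "\<And>k. k < n \<Longrightarrow> A k \<in> carrier_mat n n"
    and At: "\<And>k. k < n \<Longrightarrow> transpose_mat (A k) = - A k"
  shows "(\<Sum>p\<in>{p. p permutes {0..<Suc n} \<and> p n = n}. of_int (sign p) * det (MM n A w p)) = 0"
proof (rule involution_sum_zero[where h="\<lambda>p. revc p 0"])
  have fS: "finite {0..<Suc n}" by simp
  show "finite {p. p permutes {0..<Suc n} \<and> p n = n}"
    by (rule finite_subset[OF _ finite_permutations[OF fS]]) auto
  have aS: "0 \<in> {0..<Suc n}" by simp
  have nO: "n \<notin> orbit p 0" if p: "p permutes {0..<Suc n}" and pn: "p n = n" for p
  proof
    assume "n \<in> orbit p 0"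
    have perm: "permutation p" using p fS by (auto simp: permutation_permutes)
    have "0 \<in> orbit p n" by (rule orbit_swap[OF permutation_self_in_orbit[OF perm] \<open>n \<in> orbit p 0\<close>])
    moreover have "orbit p n = {n}" using pn by (simp add: orbit_eq_singleton_iff)
    ultimately show False using n1 by simp
  qed
  fix p assume "p \<in> {p. p permutes {0..<Suc n} \<and> p n = n}"
  then have p: "p permutes {0..<Suc n}" and pn: "p n = n" by auto
  have nOp: "n \<notin> orbit p 0" by (rule nO[OF p pn])
  show "revc p 0 \<in> {p. p permutes {0..<Suc n} \<and> p n = n}"
    using revc_permutes[OF p fS aS] revc_out[OF p fS aS nOp] pn by simp
  show "revc (revc p 0) 0 = p" by (rule revc_revc[OF p fS aS])
  show "of_int (sign (revc p 0)) * det (MM n A w (revc p 0)) = - (of_int (sign p) * det (MM n A w p))"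
    using sign_revc[OF p fS aS] det_MM_revc[OF p _ nOp Ac At] by simp
qed

lemma X2_zero:
  assumes Ac: "\<And>k. k < n \<Longrightarrow> A k \<in> carrier_mat n n"
    and At: "\<And>k. k < n \<Longrightarrow> transpose_mat (A k) = - A k"
  shows "(\<Sum>p\<in>{p. p permutes {0..<Suc n} \<and> p n = 0 \<and> orbit p 0 \<noteq> {0..<Suc n}}.
            of_int (sign p) * det (MM n A w p)) = 0"
proof (rule involution_sum_zero[where h="\<lambda>p. revc p (Min ({0..<Suc n} - orbit p 0))"])
  let ?V = "{0..<Suc n}"
  let ?X = "{p. p permutes ?V \<and> p n = 0 \<and> orbit p 0 \<noteq> ?V}"
  have fS: "finite ?V" by simp
  show "finite ?X"
    by (rule finite_subset[OF _ finite_permutations[OF fS]]) auto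
  fix p assume "p \<in> ?X"
  then have p: "p permutes ?V" and pn: "p n = 0" and o: "orbit p 0 \<noteq> ?V" by auto
  have perm: "permutation p" using p fS by (auto simp: permutation_permutes)
  define a where "a = Min (?V - orbit p 0)"
  have osub: "orbit p 0 \<subseteq> ?V" by (rule permutes_orbit_subset[OF p]) simp
  have ne: "?V - orbit p 0 \<noteq> {}" using osub o by auto
  have aV: "a \<in> ?V - orbit p 0" unfolding a_def by (rule Min_in) (use ne in auto)
  hence aS: "a \<in> ?V" and a0: "a \<notin> orbit p 0" by auto
  have n0: "n \<in> orbit p 0"
  proof -
    have "0 \<in> orbit p n" using orbit.base[of p n] pn by simp
    thus ?thesis by (rule orbit_swap[OF permutation_self_in_orbit[OF perm]])
  qed
  have 0: "0 \<notin> orbit p a"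
  proof
    assume "0 \<in> orbit p a"
    hence "a \<in> orbit p 0" by (rule orbit_swap[OF permutation_self_in_orbit[OF perm]])
    with a0 show False by simp
  qed
  have disj: "orbit p 0 \<inter> orbit p a = {}" by (rule orbit_disjoint[OF p fS aS 0])
  have nO: "n \<notin> orbit p a" using disj n0 by auto
  have orb: "orbit (revc p a) 0 = orbit p 0" by (rule orbit_revc_other[OF p fS aS 0])
  show "revc p (Min (?V - orbit p 0)) \<in> ?X"
    using revc_permutes[OF p fS aS] revc_out[OF p fS aS nO] pn orb o by (simp flip: a_def)
  show "revc (revc p (Min (?V - orbit p 0))) (Min (?V - orbit (revc p (Min (?V - orbit p 0))) 0)) = p"
    using revc_revc[OF p fS aS] orb by (simp flip: a_def)
  have an: "a \<le> n" using aS by simp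
  show "of_int (sign (revc p (Min (?V - orbit p 0)))) * det (MM n A w (revc p (Min (?V - orbit p 0))))
      = - (of_int (sign p) * det (MM n A w p))"
    using sign_revc[OF p fS aS] det_MM_revc[OF p an nO Ac At] by (simp flip: a_def)
qed



definition cyc :: "nat \<Rightarrow> nat \<Rightarrow> nat" where
  "cyc n = (\<lambda>k. if k < n then Suc k else if k = n then 0 else k)"

lemma cyc_permutes: "cyc n permutes {0..<Suc n}"
proof (rule bij_imp_permutes)
  let ?g = "\<lambda>k::nat. if k = 0 then n else if k \<le> n then k - 1 else k"
  show "bij_betw (cyc n) {0..<Suc n} {0..<Suc n}"
    by (rule bij_betw_byWitness[where f'="?g"]) (auto simp: cyc_def)
  show "cyc n x = x" if "x \<notin> {0..<Suc n}" for x using that by (auto simp: cyc_def)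
qed

definition Tset :: "nat \<Rightarrow> (nat \<Rightarrow> nat) set" where
  "Tset n = {r. r permutes {0..<Suc n} \<and> r 0 = 0 \<and> r n = n}"

definition CoreM :: "nat \<Rightarrow> (nat \<Rightarrow> complex mat) \<Rightarrow> (nat \<Rightarrow> nat \<Rightarrow> complex) \<Rightarrow> (nat \<Rightarrow> nat) \<Rightarrow> complex mat" where
  "CoreM n A w r = mat n n (\<lambda>(k,m). bf n (A m) (w (r k)) (w (r (Suc k))))"

definition Core :: "nat \<Rightarrow> (nat \<Rightarrow> complex mat) \<Rightarrow> (nat \<Rightarrow> nat \<Rightarrow> complex) \<Rightarrow> complex" where
  "Core n A w = (\<Sum>r\<in>Tset n. of_int (sign r) * det (CoreM n A w r))"

definition phi :: "nat \<Rightarrow> (nat \<Rightarrow> nat) \<Rightarrow> nat \<Rightarrow> nat" where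
  "phi n r = r \<circ> cyc n \<circ> Hilbert_Choice.inv r"

definition psi :: "nat \<Rightarrow> (nat \<Rightarrow> nat) \<Rightarrow> nat \<Rightarrow> nat" where
  "psi n p = (\<lambda>k. if k \<le> n then (p ^^ k) 0 else k)"

definition X1 :: "nat \<Rightarrow> (nat \<Rightarrow> nat) set" where
  "X1 n = {p. p permutes {0..<Suc n} \<and> p n = 0 \<and> orbit p 0 = {0..<Suc n}}"

lemma Tset_perm_n: "r \<in> Tset n \<Longrightarrow> r permutes {0..<n}"
proof -
  assume "r \<in> Tset n"
  hence rp: "r permutes {0..<Suc n}" and rn: "r n = n" by (auto simp: Tset_def)
  show "r permutes {0..<n}"
  proof (rule permutes_superset[OF rp])
    fix x assume "x \<in> {0..<Suc n} - {0..<n}"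
    hence "x = n" by auto
    thus "r x = x" using rn by simp
  qed
qed

lemma phi_permutes: "r \<in> Tset n \<Longrightarrow> phi n r permutes {0..<Suc n}"
  unfolding phi_def Tset_def
  by (auto intro!: permutes_compose cyc_permutes permutes_inv)

lemma phi_apply: "r \<in> Tset n \<Longrightarrow> k < n \<Longrightarrow> phi n r (r k) = r (Suc k)"
  unfolding phi_def Tset_def by (auto simp: permutes_inverses(2) cyc_def)

lemma phi_pow: assumes r: "r \<in> Tset n" shows "k \<le> n \<Longrightarrow> (phi n r ^^ k) 0 = r k"
proof (induct k)
  case 0 thus ?case using r by (simp add: Tset_def)
next
  case (Suc k)
  hence "(phi n r ^^ Suc k) 0 = phi n r (r k)" by simp
  also have "\<dots> = r (Suc k)" using Suc r by (intro phi_apply) auto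
  finally show ?case .
qed

lemma phi_in_X1: assumes r: "r \<in> Tset n" shows "phi n r \<in> X1 n"
proof -
  have rp: "r permutes {0..<Suc n}" and r0: "r 0 = 0" and rn: "r n = n" using r by (auto simp: Tset_def)
  have p: "phi n r permutes {0..<Suc n}" by (rule phi_permutes[OF r])
  have irn: "Hilbert_Choice.inv r n = n" using rn by (simp add: permutes_inv_eq[OF rp])
  have pn: "phi n r n = 0" using irn r0 by (simp add: phi_def cyc_def)
  have perm: "permutation (phi n r)" using p by (auto simp: permutation_permutes)
  have "orbit (phi n r) 0 \<subseteq> {0..<Suc n}" by (rule permutes_orbit_subset[OF p]) simp
  moreover have "{0..<Suc n} \<subseteq> orbit (phi n r) 0"
  proof
    fix x assume x: "x \<in> {0..<Suc n}"
    define k where "k = Hilbert_Choice.inv r x"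
    have kx: "r k = x" unfolding k_def by (rule permutes_inverses(1)[OF rp])
    have "k \<in> {0..<Suc n}" using x kx permutes_in_image[OF rp, of k] by simp
    hence "(phi n r ^^ k) 0 = x" using phi_pow[OF r, of k] kx by simp
    thus "x \<in> orbit (phi n r) 0" unfolding orbit_altdef_permutation[OF perm] by blast
  qed
  ultimately show ?thesis using p pn by (auto simp: X1_def)
qed

lemma psi_phi: assumes r: "r \<in> Tset n" shows "psi n (phi n r) = r"
proof
  fix k
  have rp: "r permutes {0..<Suc n}" using r by (simp add: Tset_def)
  show "psi n (phi n r) k = r k"
  proof (cases "k \<le> n")
    case True thus ?thesis using phi_pow[OF r True] by (simp add: psi_def)
  next
    case False
    hence "k \<notin> {0..<Suc n}" by simp
    hence "r k = k" using rp by (simp add: permutes_def)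
    thus ?thesis using False by (simp add: psi_def)
  qed
qed

context
  fixes n p assumes p: "p \<in> X1 n"
begin

private lemma pp: "p permutes {0..<Suc n}" using p by (simp add: X1_def)
private lemma pn: "p n = 0" using p by (simp add: X1_def)
private lemma po: "orbit p 0 = {0..<Suc n}" using p by (simp add: X1_def)
private lemma permX: "permutation p" using pp by (auto simp: permutation_permutes)

private lemma pow_in: "(p ^^ k) 0 \<in> {0..<Suc n}"
  using po orbit_altdef_permutation[OF permX, of 0] by blast

private lemma pow_inj: "inj_on (\<lambda>k. (p ^^ k) 0) {0..n}"
proof (rule inj_onI, rule ccontr)
  fix i j assume i: "i \<in> {0..n}" and j: "j \<in> {0..n}" and e: "(p ^^ i) 0 = (p ^^ j) 0" and ne: "i \<noteq> j"
  have injp: "inj p" using pp by (rule permutes_inj)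
  have "\<exists>d. 0 < d \<and> d \<le> n \<and> (p ^^ d) 0 = 0"
  proof (cases "i < j")
    case True
    thus ?thesis using funpow_diff[OF injp _ e] i j by (intro exI[of _ "j - i"]) auto
  next
    case False
    hence "j < i" using ne by simp
    thus ?thesis using funpow_diff[OF injp _ e[symmetric]] i j by (intro exI[of _ "i - j"]) auto
  qed
  then obtain d where d: "0 < d" "d \<le> n" "(p ^^ d) 0 = 0" by blast
  have "orbit p 0 = {(p ^^ m) 0 | m. m < d}" by (rule orbit_altdef_bounded[OF d(3) d(1)])
  also have "\<dots> = (\<lambda>m. (p ^^ m) 0) ` {..<d}" by auto
  finally have "card (orbit p 0) \<le> d" using card_image_le[of "{..<d}" "\<lambda>m. (p ^^ m) 0"] by simp
  thus False using po d(2) by simp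
qed

private lemma pow_image: "(\<lambda>k. (p ^^ k) 0) ` {0..n} = {0..<Suc n}"
proof (rule card_subset_eq)
  show "finite {0..<Suc n}" by simp
  show "(\<lambda>k. (p ^^ k) 0) ` {0..n} \<subseteq> {0..<Suc n}" using pow_in by auto
  show "card ((\<lambda>k. (p ^^ k) 0) ` {0..n}) = card {0..<Suc n}"
    using card_image[OF pow_inj] by simp
qed

private lemma pow_n: "(p ^^ n) 0 = n"
proof -
  have "n \<in> (\<lambda>k. (p ^^ k) 0) ` {0..n}" using pow_image by simp
  then obtain k where k: "k \<le> n" "(p ^^ k) 0 = n" by auto
  show ?thesis
  proof (cases "k = n")
    case True thus ?thesis using k by simp
  next
    case False
    hence "Suc k \<le> n" using k by simp
    have "(p ^^ Suc k) 0 = (p ^^ 0) 0" using k pn by simp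
    hence "Suc k = 0" using inj_onD[OF pow_inj _ _ _] \<open>Suc k \<le> n\<close> by (metis atLeastAtMost_iff le0)
    thus ?thesis by simp
  qed
qed

lemma psi_in_Tset: "psi n p \<in> Tset n"
proof -
  have "psi n p permutes {0..<Suc n}"
  proof (rule bij_imp_permutes)
    have "bij_betw (\<lambda>k. (p ^^ k) 0) {0..n} {0..<Suc n}"
      using pow_inj pow_image by (simp add: bij_betw_def)
    moreover have "{0..n} = {0..<Suc n}" by auto
    ultimately have "bij_betw (\<lambda>k. (p ^^ k) 0) {0..<Suc n} {0..<Suc n}" by simp
    thus "bij_betw (psi n p) {0..<Suc n} {0..<Suc n}"
      by (rule bij_betw_cong[THEN iffD1, rotated]) (auto simp: psi_def)
    show "psi n p x = x" if "x \<notin> {0..<Suc n}" for x using that by (simp add: psi_def)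
  qed
  thus ?thesis using pow_n by (simp add: Tset_def psi_def)
qed

lemma phi_psi: "phi n (psi n p) = p"
proof -
  let ?q = "psi n p"
  have qp: "?q permutes {0..<Suc n}" using psi_in_Tset by (simp add: Tset_def)
  have qn: "?q n = n" using psi_in_Tset by (simp add: Tset_def)
  have comm: "?q \<circ> cyc n = p \<circ> ?q"
  proof
    fix k show "(?q \<circ> cyc n) k = (p \<circ> ?q) k"
    proof (cases "k < n")
      case True thus ?thesis by (simp add: cyc_def psi_def)
    next
      case False
      show ?thesis
      proof (cases "k = n")
        case True thus ?thesis using qn pn by (simp add: cyc_def psi_def)
      next
        case False
        with \<open>\<not> k < n\<close> have "k \<notin> {0..<Suc n}" by simp
        thus ?thesis using \<open>\<not> k < n\<close> False pp by (simp add: cyc_def psi_def permutes_def)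
      qed
    qed
  qed
  have "phi n ?q = p \<circ> ?q \<circ> Hilbert_Choice.inv ?q" unfolding phi_def comm ..
  also have "\<dots> = p" by (simp add: comp_assoc permutes_inv_o(1)[OF qp])
  finally show ?thesis .
qed

end

lemma sign_phi: assumes r: "r \<in> Tset n" shows "sign (phi n r) = sign (cyc n)"
proof -
  have rp: "r permutes {0..<Suc n}" using r by (simp add: Tset_def)
  have pr: "permutation r" using rp by (auto simp: permutation_permutes)
  have pc: "permutation (cyc n)" using cyc_permutes by (auto simp: permutation_permutes)
  have pi: "permutation (Hilbert_Choice.inv r)" using pr by (simp add: permutation_inverse)
  have "sign (phi n r) = sign (r \<circ> cyc n) * sign (Hilbert_Choice.inv r)"
    unfolding phi_def by (rule sign_compose[OF permutation_compose[OF pr pc] pi])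
  also have "\<dots> = sign (cyc n) * (sign r * sign r)"
    by (simp add: sign_compose[OF pr pc] sign_inverse[OF pr])
  finally show ?thesis by simp
qed

lemma CoreM_phi: assumes r: "r \<in> Tset n"
  shows "CoreM n A w r = mat n n (\<lambda>(k,m). MM n A w (phi n r) $$ (r k, m))"
proof (rule eq_matI)
  have rn: "r permutes {0..<n}" by (rule Tset_perm_n[OF r])
  fix i j assume "i < dim_row (mat n n (\<lambda>(k,m). MM n A w (phi n r) $$ (r k, m)))"
    "j < dim_col (mat n n (\<lambda>(k,m). MM n A w (phi n r) $$ (r k, m)))"
  hence i: "i < n" and j: "j < n" by auto
  have "r i < n" using permutes_in_image[OF rn, of i] i by simp
  thus "CoreM n A w r $$ (i, j) = mat n n (\<lambda>(k,m). MM n A w (phi n r) $$ (r k, m)) $$ (i, j)"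
    using i j phi_apply[OF r i] by (simp add: CoreM_def MM_def)
qed (auto simp: CoreM_def)

lemma Core_X1:
  "Core n A w = of_int (sign (cyc n)) * (\<Sum>p\<in>X1 n. of_int (sign p) * det (MM n A w p))"
proof -
  have "Core n A w = (\<Sum>p\<in>X1 n. of_int (sign (cyc n)) * (of_int (sign p) * det (MM n A w p)))"
    unfolding Core_def
  proof (rule sum.reindex_bij_witness[where j="phi n" and i="psi n"])
    fix r assume r: "r \<in> Tset n"
    show "psi n (phi n r) = r" by (rule psi_phi[OF r])
    show "phi n r \<in> X1 n" by (rule phi_in_X1[OF r])
    have rn: "r permutes {0..<n}" by (rule Tset_perm_n[OF r])
    have "det (CoreM n A w r) = of_int (sign r) * det (MM n A w (phi n r))"
      unfolding CoreM_phi[OF r] by (rule det_permute_rows[OF MM_carrier rn])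
    hence "of_int (sign r) * det (CoreM n A w r) = det (MM n A w (phi n r))"
      by (simp add: mult.assoc[symmetric] flip: of_int_mult)
    moreover have "of_int (sign (cyc n)) * of_int (sign (phi n r)) = (1::complex)"
      using sign_phi[OF r] by (simp flip: of_int_mult)
    ultimately show "of_int (sign (cyc n)) * (of_int (sign (phi n r)) * det (MM n A w (phi n r)))
       = of_int (sign r) * det (CoreM n A w r)"
      by (simp add: mult.assoc[symmetric])
  next
    fix p assume p: "p \<in> X1 n"
    show "phi n (psi n p) = p" by (rule phi_psi[OF p])
    show "psi n p \<in> Tset n" by (rule psi_in_Tset[OF p])
  qed
  thus ?thesis by (simp add: sum_distrib_left)
qed



definition Rh :: "nat \<Rightarrow> (nat \<Rightarrow> complex mat) \<Rightarrow> (nat \<Rightarrow> nat \<Rightarrow> complex) \<Rightarrow> (nat \<Rightarrow> nat) \<Rightarrow> complex mat" where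
  "Rh n A w mu = mat (Suc n) (Suc n) (\<lambda>(r,x). if r < n then (if x < n then (\<Sum>a<n. w r a * A (mu r) $$ (a,x)) else 0)
      else (if x = n then 1 else 0))"

definition Whe :: "nat \<Rightarrow> (nat \<Rightarrow> nat \<Rightarrow> complex) \<Rightarrow> nat \<Rightarrow> complex mat" where
  "Whe n w e = mat (Suc n) (Suc n) (\<lambda>(x,c). if x < n then w c x else (if c = e then 1 else 0))"

definition G :: "nat \<Rightarrow> (nat \<Rightarrow> complex mat) \<Rightarrow> (nat \<Rightarrow> nat \<Rightarrow> complex) \<Rightarrow> complex" where
  "G n A w = (\<Sum>mu\<in>{mu. mu permutes {0..<n}}. of_int (sign mu) * det (Rh n A w mu))"

lemma RW_entry:
  assumes r: "r < Suc n" and c: "c < Suc n"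
  shows "(Rh n A w mu * Whe n w e) $$ (r,c) = (if r < n then bf n (A (mu r)) (w r) (w c) else (if c = e then 1 else 0))"
proof -
  have "(Rh n A w mu * Whe n w e) $$ (r,c) = (\<Sum>x\<in>{0..<Suc n}. Rh n A w mu $$ (r,x) * Whe n w e $$ (x,c))"
    using r c by (simp add: Rh_def Whe_def scalar_prod_def)
  also have "\<dots> = (\<Sum>x\<in>{0..<n}. Rh n A w mu $$ (r,x) * Whe n w e $$ (x,c)) + Rh n A w mu $$ (r,n) * Whe n w e $$ (n,c)"
    by simp
  also have "\<dots> = (if r < n then bf n (A (mu r)) (w r) (w c) else (if c = e then 1 else 0))"
  proof (cases "r < n")
    case True
    have "(\<Sum>x\<in>{0..<n}. Rh n A w mu $$ (r,x) * Whe n w e $$ (x,c))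
        = (\<Sum>x<n. (\<Sum>a<n. w r a * A (mu r) $$ (a,x)) * w c x)"
      using True r c by (intro sum.cong) (auto simp: Rh_def Whe_def)
    also have "\<dots> = (\<Sum>x<n. \<Sum>a<n. w r a * A (mu r) $$ (a,x) * w c x)" by (simp add: sum_distrib_right)
    also have "\<dots> = bf n (A (mu r)) (w r) (w c)" unfolding bf_def by (rule sum.swap)
    finally show ?thesis using True c by (simp add: Rh_def Whe_def)
  next
    case False
    hence rn: "r = n" using r by simp
    have "(\<Sum>x\<in>{0..<n}. Rh n A w mu $$ (r,x) * Whe n w e $$ (x,c)) = 0"
      using rn by (intro sum.neutral) (auto simp: Rh_def)
    thus ?thesis using rn c by (simp add: Rh_def Whe_def)
  qed
  finally show ?thesis .
qed

lemma det_RW: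
  "det (Rh n A w mu * Whe n w e) = (\<Sum>p\<in>{p. p permutes {0..<Suc n} \<and> p n = e}.
      of_int (sign p) * (\<Prod>r\<in>{0..<n}. bf n (A (mu r)) (w r) (w (p r))))"
proof -
  have R: "Rh n A w mu \<in> carrier_mat (Suc n) (Suc n)" by (simp add: Rh_def)
  have W: "Whe n w e \<in> carrier_mat (Suc n) (Suc n)" by (simp add: Whe_def)
  have C: "Rh n A w mu * Whe n w e \<in> carrier_mat (Suc n) (Suc n)"
    by (rule mult_carrier_mat[OF R W])
  have "det (Rh n A w mu * Whe n w e) = (\<Sum>p\<in>{p. p permutes {0..<Suc n}}.
      (if p n = e then of_int (sign p) * (\<Prod>r\<in>{0..<n}. bf n (A (mu r)) (w r) (w (p r))) else 0))"
    unfolding det_def'[OF C]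
  proof (rule sum.cong[OF refl])
    fix p assume "p \<in> {p. p permutes {0..<Suc n}}"
    hence p: "p permutes {0..<Suc n}" by simp
    have pin: "i < Suc n \<Longrightarrow> p i < Suc n" for i using permutes_in_image[OF p, of i] by simp
    have "(\<Prod>i = 0..<Suc n. (Rh n A w mu * Whe n w e) $$ (i, p i))
        = (\<Prod>i = 0..<n. (Rh n A w mu * Whe n w e) $$ (i, p i)) * (Rh n A w mu * Whe n w e) $$ (n, p n)"
      by simp
    also have "(\<Prod>i = 0..<n. (Rh n A w mu * Whe n w e) $$ (i, p i)) = (\<Prod>r\<in>{0..<n}. bf n (A (mu r)) (w r) (w (p r)))"
      by (rule prod.cong[OF refl]) (simp add: RW_entry pin)
    also have "(Rh n A w mu * Whe n w e) $$ (n, p n) = (if p n = e then 1 else 0)"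
      by (simp add: RW_entry pin)
    finally show "signof p * (\<Prod>i = 0..<Suc n. (Rh n A w mu * Whe n w e) $$ (i, p i)) =
       (if p n = e then of_int (sign p) * (\<Prod>r\<in>{0..<n}. bf n (A (mu r)) (w r) (w (p r))) else 0)"
      by simp
  qed
  also have "\<dots> = (\<Sum>p\<in>{p \<in> {p. p permutes {0..<Suc n}}. p n = e}.
      of_int (sign p) * (\<Prod>r\<in>{0..<n}. bf n (A (mu r)) (w r) (w (p r))))"
    by (rule sum.inter_filter[symmetric]) (simp add: finite_permutations)
  also have "{p \<in> {p. p permutes {0..<Suc n}}. p n = e} = {p. p permutes {0..<Suc n} \<and> p n = e}" by auto
  finally show ?thesis .
qed

lemma sum_Pe:
  "(\<Sum>p\<in>{p. p permutes {0..<Suc n} \<and> p n = e}. of_int (sign p) * det (MM n A w p)) = G n A w * det (Whe n w e)"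
proof -
  let ?P = "{p. p permutes {0..<Suc n} \<and> p n = e}"
  let ?M = "{mu. mu permutes {0..<n}}"
  have "(\<Sum>p\<in>?P. of_int (sign p) * det (MM n A w p))
      = (\<Sum>p\<in>?P. \<Sum>mu\<in>?M. of_int (sign p) * (of_int (sign mu) * (\<Prod>r\<in>{0..<n}. bf n (A (mu r)) (w r) (w (p r)))))"
  proof (rule sum.cong[OF refl])
    fix p assume "p \<in> ?P"
    have "det (MM n A w p) = (\<Sum>mu\<in>?M. of_int (sign mu) * (\<Prod>r\<in>{0..<n}. bf n (A (mu r)) (w r) (w (p r))))"
      unfolding det_def'[OF MM_carrier]
    proof (rule sum.cong[OF refl])
      fix mu assume "mu \<in> ?M"
      hence mu: "mu permutes {0..<n}" by simp
      show "signof mu * (\<Prod>i = 0..<n. MM n A w p $$ (i, mu i)) = of_int (sign mu) * (\<Prod>r\<in>{0..<n}. bf n (A (mu r)) (w r) (w (p r)))"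
        using permutes_in_image[OF mu] by (simp add: MM_def)
    qed
    thus "of_int (sign p) * det (MM n A w p)
      = (\<Sum>mu\<in>?M. of_int (sign p) * (of_int (sign mu) * (\<Prod>r\<in>{0..<n}. bf n (A (mu r)) (w r) (w (p r)))))"
      by (simp add: sum_distrib_left)
  qed
  also have "\<dots> = (\<Sum>mu\<in>?M. \<Sum>p\<in>?P. of_int (sign p) * (of_int (sign mu) * (\<Prod>r\<in>{0..<n}. bf n (A (mu r)) (w r) (w (p r)))))"
    by (rule sum.swap)
  also have "\<dots> = (\<Sum>mu\<in>?M. of_int (sign mu) * det (Rh n A w mu * Whe n w e))"
    unfolding det_RW by (simp add: sum_distrib_left ac_simps)
  also have "\<dots> = (\<Sum>mu\<in>?M. of_int (sign mu) * det (Rh n A w mu) * det (Whe n w e))"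
  proof (rule sum.cong[OF refl])
    fix mu
    have "det (Rh n A w mu * Whe n w e) = det (Rh n A w mu) * det (Whe n w e)"
      by (rule det_mult[of _ "Suc n"]) (simp_all add: Rh_def Whe_def)
    thus "of_int (sign mu) * det (Rh n A w mu * Whe n w e) = of_int (sign mu) * det (Rh n A w mu) * det (Whe n w e)"
      by simp
  qed
  also have "\<dots> = G n A w * det (Whe n w e)" by (simp add: G_def sum_distrib_right)
  finally show ?thesis .
qed

definition rv :: "nat \<Rightarrow> nat \<Rightarrow> nat" where "rv n = (\<lambda>k. if k \<le> n then n - k else k)"
definition rr :: "nat \<Rightarrow> nat \<Rightarrow> nat" where "rr n = (\<lambda>k. if k < n then n - Suc k else k)"

lemma rv_rv[simp]: "rv n (rv n k) = k" by (simp add: rv_def)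

lemma rv_permutes: "rv n permutes {0..<Suc n}"
  by (rule bij_imp_permutes, rule bij_betw_byWitness[where f'="rv n"]) (auto simp: rv_def)

lemma rr_permutes: "rr n permutes {0..<n}"
  by (rule bij_imp_permutes, rule bij_betw_byWitness[where f'="rr n"]) (auto simp: rr_def)

lemma det_permute_cols:
  assumes B: "B \<in> carrier_mat m m" and s: "s permutes {0..<m}"
  shows "det (mat m m (\<lambda>(i,j). B $$ (i, s j))) = of_int (sign s) * det B"
proof -
  have Bt: "transpose_mat B \<in> carrier_mat m m" using B by simp
  have eq: "mat m m (\<lambda>(i,j). B $$ (i, s j)) = transpose_mat (mat m m (\<lambda>(i,j). transpose_mat B $$ (s i, j)))"
    by (rule eq_matI) (use B permutes_in_image[OF s] in auto)
  show ?thesis unfolding eq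
    by (subst det_transpose[of _ m]) (auto simp: det_permute_rows[OF Bt s] det_transpose[OF B])
qed

lemma Tset_conj: assumes r: "r \<in> Tset n" shows "rv n \<circ> r \<circ> rv n \<in> Tset n"
proof -
  have rp: "r permutes {0..<Suc n}" and r0: "r 0 = 0" and rn: "r n = n" using r by (auto simp: Tset_def)
  have "rv n \<circ> r \<circ> rv n permutes {0..<Suc n}"
    by (intro permutes_compose rv_permutes rp)
  moreover have "(rv n \<circ> r \<circ> rv n) 0 = 0" using rn by (simp add: rv_def)
  moreover have "(rv n \<circ> r \<circ> rv n) n = n" using r0 by (simp add: rv_def)
  ultimately show ?thesis by (simp add: Tset_def)
qed

lemma sign_conj_rv: assumes r: "r \<in> Tset n" shows "sign (rv n \<circ> r \<circ> rv n) = sign r"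
proof -
  have pr: "permutation r" using r by (auto simp: Tset_def permutation_permutes)
  have pv: "permutation (rv n)" using rv_permutes by (auto simp: permutation_permutes)
  have "sign (rv n \<circ> r \<circ> rv n) = sign (rv n) * sign r * sign (rv n)"
    by (simp add: sign_compose permutation_compose pr pv)
  thus ?thesis by simp
qed

lemma Core_rev:
  assumes Ac: "\<And>k. k < n \<Longrightarrow> A k \<in> carrier_mat n n"
    and At: "\<And>k. k < n \<Longrightarrow> transpose_mat (A k) = - A k"
  shows "Core n A (\<lambda>k. w (rv n k)) = (-1) ^ n * of_int (sign (rr n)) * Core n A w"
proof -
  let ?w' = "\<lambda>k. w (rv n k)"
  have "(\<Sum>r\<in>Tset n. of_int (sign r) * ((-1) ^ n * of_int (sign (rr n)) * det (CoreM n A w r))) = Core n A ?w'"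
    unfolding Core_def
  proof (rule sum.reindex_bij_witness[where i="\<lambda>r. rv n \<circ> r \<circ> rv n" and j="\<lambda>r. rv n \<circ> r \<circ> rv n"])
    fix r assume r: "r \<in> Tset n"
    show "rv n \<circ> (rv n \<circ> r \<circ> rv n) \<circ> rv n = r" by (auto simp: o_def)
    show "rv n \<circ> r \<circ> rv n \<in> Tset n" by (rule Tset_conj[OF r])
    have rp: "r permutes {0..<Suc n}" using r by (simp add: Tset_def)
    have rin: "k \<le> n \<Longrightarrow> r k \<le> n" for k using permutes_in_image[OF rp, of k] by simp
    have eq: "CoreM n A ?w' (rv n \<circ> r \<circ> rv n) = mat n n (\<lambda>(k,m). (-1) * CoreM n A w r $$ (rr n k, m))"
    proof (rule eq_matI)
      fix k m assume "k < dim_row (mat n n (\<lambda>(k,m). (-1) * CoreM n A w r $$ (rr n k, m)))"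
        "m < dim_col (mat n n (\<lambda>(k,m). (-1) * CoreM n A w r $$ (rr n k, m)))"
      hence k: "k < n" and m: "m < n" by auto
      have e1: "rv n (rv n (r (rv n k))) = r (n - k)" using k by (simp add: rv_def)
      have e2: "rv n (rv n (r (rv n (Suc k)))) = r (n - Suc k)" using k by (simp add: rv_def)
      have nk: "n - k = Suc (n - Suc k)" using k by simp
      have "CoreM n A ?w' (rv n \<circ> r \<circ> rv n) $$ (k, m) = bf n (A m) (w (r (Suc (n - Suc k)))) (w (r (n - Suc k)))"
        using k m e1 e2 nk by (simp add: CoreM_def)
      also have "\<dots> = - bf n (A m) (w (r (n - Suc k))) (w (r (Suc (n - Suc k))))"
        by (rule bf_antisym[OF Ac[OF m] At[OF m]])
      also have "\<dots> = (-1) * CoreM n A w r $$ (rr n k, m)"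
        using k m by (simp add: CoreM_def rr_def)
      finally show "CoreM n A ?w' (rv n \<circ> r \<circ> rv n) $$ (k, m) = mat n n (\<lambda>(k,m). (-1) * CoreM n A w r $$ (rr n k, m)) $$ (k, m)"
        using k m by simp
    qed (auto simp: CoreM_def)
    have "det (CoreM n A ?w' (rv n \<circ> r \<circ> rv n)) = (\<Prod>k\<in>{0..<n}. (-1::complex)) * (of_int (sign (rr n)) * det (CoreM n A w r))"
      unfolding eq by (rule det_scale_perm_rows) (auto simp: CoreM_def rr_permutes)
    thus "of_int (sign (rv n \<circ> r \<circ> rv n)) * det (CoreM n A ?w' (rv n \<circ> r \<circ> rv n))
       = of_int (sign r) * ((-1) ^ n * of_int (sign (rr n)) * det (CoreM n A w r))"
      using sign_conj_rv[OF r] by simp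
  next
    fix r assume r: "r \<in> Tset n"
    show "rv n \<circ> (rv n \<circ> r \<circ> rv n) \<circ> rv n = r" by (auto simp: o_def)
    show "rv n \<circ> r \<circ> rv n \<in> Tset n" by (rule Tset_conj[OF r])
  qed
  thus ?thesis by (simp add: Core_def sum_distrib_left ac_simps)
qed

lemma Whe_rev: "det (Whe n (\<lambda>k. w (rv n k)) 0) = of_int (sign (rv n)) * det (Whe n w n)"
proof -
  have eq: "Whe n (\<lambda>k. w (rv n k)) 0 = mat (Suc n) (Suc n) (\<lambda>(i,j). Whe n w n $$ (i, rv n j))"
  proof (rule eq_matI)
    fix i j assume "i < dim_row (mat (Suc n) (Suc n) (\<lambda>(i,j). Whe n w n $$ (i, rv n j)))"
      "j < dim_col (mat (Suc n) (Suc n) (\<lambda>(i,j). Whe n w n $$ (i, rv n j)))"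
    hence i: "i < Suc n" and j: "j < Suc n" by auto
    have "rv n j < Suc n" using j by (simp add: rv_def)
    moreover have "(rv n j = n) = (j = 0)" using j by (auto simp: rv_def)
    ultimately show "Whe n (\<lambda>k. w (rv n k)) 0 $$ (i, j) = mat (Suc n) (Suc n) (\<lambda>(i,j). Whe n w n $$ (i, rv n j)) $$ (i, j)"
      using i j by (simp add: Whe_def)
  qed (auto simp: Whe_def)
  show ?thesis unfolding eq by (rule det_permute_cols) (auto simp: Whe_def rv_permutes)
qed

lemma Core_G:
  assumes Ac: "\<And>k. k < n \<Longrightarrow> A k \<in> carrier_mat n n"
    and At: "\<And>k. k < n \<Longrightarrow> transpose_mat (A k) = - A k"
  shows "Core n A w = of_int (sign (cyc n)) * (G n A w * det (Whe n w 0))"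
proof -
  let ?V = "{0..<Suc n}"
  let ?f = "\<lambda>p. of_int (sign p) * det (MM n A w p)"
  let ?X2 = "{p. p permutes ?V \<and> p n = 0 \<and> orbit p 0 \<noteq> ?V}"
  have fin: "finite {p. p permutes ?V \<and> p n = 0}"
    by (rule finite_subset[OF _ finite_permutations[of ?V]]) auto
  have split: "{p. p permutes ?V \<and> p n = 0} = X1 n \<union> ?X2" by (auto simp: X1_def)
  have "sum ?f {p. p permutes ?V \<and> p n = 0} = sum ?f (X1 n) + sum ?f ?X2"
    unfolding split by (rule sum.union_disjoint) (use fin split in \<open>auto simp: X1_def\<close>)
  also have "sum ?f ?X2 = 0" by (rule X2_zero[OF Ac At])
  finally have "sum ?f (X1 n) = G n A w * det (Whe n w 0)" using sum_Pe[where n=n and e=0 and A=A and w=w] by simp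
  thus ?thesis by (simp add: Core_X1)
qed

lemma Core_zero:
  assumes n1: "n \<ge> 1"
    and Ac: "\<And>k. k < n \<Longrightarrow> A k \<in> carrier_mat n n"
    and At: "\<And>k. k < n \<Longrightarrow> transpose_mat (A k) = - A k"
  shows "Core n A w = 0"
proof -
  have PR: "G n A w * det (Whe n w n) = 0" for w
    using PR_zero[OF n1 Ac At, where w=w] sum_Pe[where n=n and e=n and A=A and w=w] by simp
  show ?thesis
  proof (cases "det (Whe n w n) = 0")
    case False
    hence "G n A w = 0" using PR[of w] by simp
    thus ?thesis using Core_G[OF Ac At, where w=w] by simp
  next
    case True
    have "Core n A (\<lambda>k. w (rv n k)) = 0"
      using Core_G[OF Ac At, where w="\<lambda>k. w (rv n k)"] Whe_rev[where n=n and w=w] True by simp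
    hence "(-1) ^ n * of_int (sign (rr n)) * Core n A w = 0" using Core_rev[OF Ac At, where w=w] by simp
    moreover have "(-1::complex) ^ n * of_int (sign (rr n)) \<noteq> 0" by (simp add: sign_def)
    ultimately show ?thesis by simp
  qed
qed



definition rvm :: "nat \<Rightarrow> (nat \<Rightarrow> complex) \<Rightarrow> complex mat \<Rightarrow> nat \<Rightarrow> complex" where
  "rvm n p M j = (\<Sum>x<n. p x * M $$ (x,j))"

lemma mult_entry:
  assumes "X \<in> carrier_mat n n" "Y \<in> carrier_mat n n" "i < n" "j < n"
  shows "(X * Y) $$ (i,j) = (\<Sum>k<n. X $$ (i,k) * Y $$ (k,j))"
  using assms by (simp add: scalar_prod_def lessThan_atLeast0)

lemma rvm_mult:
  assumes X: "X \<in> carrier_mat n n" and Y: "Y \<in> carrier_mat n n" and j: "j < n"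
  shows "rvm n p (X * Y) j = rvm n (\<lambda>y. rvm n p X y) Y j"
proof -
  have "rvm n p (X * Y) j = (\<Sum>x<n. p x * (\<Sum>k<n. X $$ (x,k) * Y $$ (k,j)))"
    unfolding rvm_def by (rule sum.cong[OF refl]) (simp add: mult_entry[OF X Y _ j])
  also have "\<dots> = (\<Sum>x<n. \<Sum>k<n. p x * X $$ (x,k) * Y $$ (k,j))" by (simp add: sum_distrib_left ac_simps)
  also have "\<dots> = (\<Sum>k<n. \<Sum>x<n. p x * X $$ (x,k) * Y $$ (k,j))" by (rule sum.swap)
  also have "\<dots> = rvm n (\<lambda>y. rvm n p X y) Y j" by (simp add: rvm_def sum_distrib_right)
  finally show ?thesis .
qed

lemma rvm_lin: "rvm n (\<lambda>y. \<Sum>q\<in>Q. a q * u q y) M j = (\<Sum>q\<in>Q. a q * rvm n (u q) M j)"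
proof -
  have "rvm n (\<lambda>y. \<Sum>q\<in>Q. a q * u q y) M j = (\<Sum>x<n. (\<Sum>q\<in>Q. a q * u q x) * M $$ (x,j))"
    by (simp add: rvm_def)
  also have "\<dots> = (\<Sum>x<n. \<Sum>q\<in>Q. a q * (u q x * M $$ (x,j)))"
    by (simp add: sum_distrib_right mult.assoc)
  also have "\<dots> = (\<Sum>q\<in>Q. \<Sum>x<n. a q * (u q x * M $$ (x,j)))" by (rule sum.swap)
  also have "\<dots> = (\<Sum>q\<in>Q. a q * rvm n (u q) M j)" by (simp add: rvm_def sum_distrib_left)
  finally show ?thesis .
qed

lemma rvm_cong: "(\<And>y. y < n \<Longrightarrow> p y = p' y) \<Longrightarrow> rvm n p M j = rvm n p' M j"
  by (simp add: rvm_def)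

lemma bf_rvm: "bf n M p u = (\<Sum>z<n. rvm n p M z * u z)"
proof -
  have "bf n M p u = (\<Sum>z<n. \<Sum>a<n. p a * M $$ (a,z) * u z)" unfolding bf_def by (rule sum.swap)
  thus ?thesis by (simp add: rvm_def sum_distrib_right)
qed

lemma rvm_AB:
  assumes A: "A \<in> carrier_mat n n" and B: "B \<in> carrier_mat n n"
    and Bd: "\<And>x y. x < n \<Longrightarrow> y < n \<Longrightarrow> B $$ (x,y) = (\<Sum>q\<in>Q. c q * v q x * v q y)"
    and y: "y < n"
  shows "rvm n p (A * B) y = (\<Sum>q\<in>Q. (c q * bf n A p (v q)) * v q y)"
proof -
  have "rvm n p (A * B) y = (\<Sum>z<n. rvm n p A z * B $$ (z,y))"
    unfolding rvm_mult[OF A B y] by (simp add: rvm_def)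
  also have "\<dots> = (\<Sum>z<n. \<Sum>q\<in>Q. rvm n p A z * (c q * v q z * v q y))"
    by (rule sum.cong[OF refl]) (simp add: Bd y sum_distrib_left)
  also have "\<dots> = (\<Sum>q\<in>Q. \<Sum>z<n. rvm n p A z * (c q * v q z * v q y))" by (rule sum.swap)
  also have "\<dots> = (\<Sum>q\<in>Q. (c q * bf n A p (v q)) * v q y)"
    by (rule sum.cong[OF refl]) (simp add: bf_rvm sum_distrib_left sum_distrib_right ac_simps)
  finally show ?thesis .
qed

lemma sum_PiE_insert:
  assumes "a \<notin> S"
  shows "sum f (PiE (insert a S) T) = (\<Sum>q\<in>T a. \<Sum>g\<in>PiE S T. f (g(a := q)))"
proof -
  have "sum f (PiE (insert a S) T) = sum f ((\<lambda>(y, g). g(a := y)) ` (T a \<times> PiE S T))"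
    by (simp add: PiE_insert_eq)
  also have "\<dots> = sum (f \<circ> (\<lambda>(y, g). g(a := y))) (T a \<times> PiE S T)"
    by (rule sum.reindex[OF inj_combinator[OF assms]])
  also have "\<dots> = (\<Sum>(q,g)\<in>T a \<times> PiE S T. f (g(a := q)))"
    by (auto intro!: sum.cong)
  also have "\<dots> = (\<Sum>q\<in>T a. \<Sum>g\<in>PiE S T. f (g(a := q)))"
    by (rule sum.cartesian_product[symmetric])
  finally show ?thesis .
qed

definition FW :: "(nat \<Rightarrow> complex mat) \<Rightarrow> (nat \<Rightarrow> complex mat) \<Rightarrow> (nat \<Rightarrow> nat) \<Rightarrow> (nat \<Rightarrow> nat) \<Rightarrow> nat \<Rightarrow> nat \<Rightarrow> complex mat" where
  "FW A B s t N a = foldr (\<lambda>i M. A (s i) * B (t i) * M) [a..<N] (A (s N))"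

lemma FW_step: "a < N \<Longrightarrow> FW A B s t N a = A (s a) * B (t a) * FW A B s t N (Suc a)"
  by (simp add: FW_def upt_conv_Cons)

lemma FW_base: "FW A B s t N N = A (s N)" by (simp add: FW_def)

lemma FW_carrier:
  assumes As: "\<And>k. k \<le> N \<Longrightarrow> A (s k) \<in> carrier_mat n n" and Bs: "\<And>k. k < N \<Longrightarrow> B (t k) \<in> carrier_mat n n"
  shows "a \<le> N \<Longrightarrow> FW A B s t N a \<in> carrier_mat n n"
proof (induction "N - a" arbitrary: a)
  case 0 thus ?case using As by (simp add: FW_base)
next
  case (Suc m)
  hence a: "a < N" by simp
  have "FW A B s t N (Suc a) \<in> carrier_mat n n" using Suc a by simp
  thus ?case unfolding FW_step[OF a] using As[of a] Bs[OF a] a by (auto intro!: mult_carrier_mat)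
qed

definition zz :: "('q \<Rightarrow> nat \<Rightarrow> complex) \<Rightarrow> nat \<Rightarrow> (nat \<Rightarrow> complex) \<Rightarrow> (nat \<Rightarrow> complex) \<Rightarrow> (nat \<Rightarrow> 'q) \<Rightarrow> nat \<Rightarrow> nat \<Rightarrow> nat \<Rightarrow> complex" where
  "zz v N e p g a k = (if k = a then p else if k \<le> N then v (g (k - 1)) else e)"

lemma FW_expand:
  assumes As: "\<And>k. k \<le> N \<Longrightarrow> A (s k) \<in> carrier_mat n n" and Bs: "\<And>k. k < N \<Longrightarrow> B (t k) \<in> carrier_mat n n"
    and Bd: "\<And>k x y. k < N \<Longrightarrow> x < n \<Longrightarrow> y < n \<Longrightarrow> B (t k) $$ (x,y) = (\<Sum>q\<in>Q. c (t k) q * v q x * v q y)"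
    and j: "j < n"
  shows "a \<le> N \<Longrightarrow> rvm n p (FW A B s t N a) j =
    (\<Sum>g\<in>PiE {a..<N} (\<lambda>_. Q). (\<Prod>k\<in>{a..<N}. c (t k) (g k)) *
       (\<Prod>k\<in>{a..<Suc N}. bf n (A (s k)) (zz v N (\<lambda>y. if y = j then 1 else 0) p g a k)
                                   (zz v N (\<lambda>y. if y = j then 1 else 0) p g a (Suc k))))"
proof (induction "N - a" arbitrary: a p)
  case 0
  hence a: "a = N" by simp
  let ?e = "\<lambda>y::nat. if y = j then (1::complex) else 0"
  have "bf n (A (s N)) p ?e = rvm n p (A (s N)) j"
    unfolding bf_rvm using j by (simp add: if_distrib cong: if_cong)
  thus ?case using a by (simp add: FW_base zz_def)
next
  case (Suc m)
  hence a: "a < N" and m: "m = N - Suc a" by auto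
  let ?e = "\<lambda>y::nat. if y = j then (1::complex) else 0"
  let ?F = "FW A B s t N (Suc a)"
  have Fc: "?F \<in> carrier_mat n n" by (rule FW_carrier) (use As Bs a in auto)
  have Ac: "A (s a) \<in> carrier_mat n n" using As a by simp
  have Bc: "B (t a) \<in> carrier_mat n n" using Bs a by simp
  define X where "X = (\<lambda>p g. (\<Prod>k\<in>{Suc a..<N}. c (t k) (g k)) *
       (\<Prod>k\<in>{Suc a..<Suc N}. bf n (A (s k)) (zz v N ?e p g (Suc a) k) (zz v N ?e p g (Suc a) (Suc k))))"
  have IH: "rvm n p' ?F j = (\<Sum>g\<in>PiE {Suc a..<N} (\<lambda>_. Q). X p' g)" for p'
    unfolding X_def using Suc(1)[of "Suc a" p'] m a by simp
  have "rvm n p (FW A B s t N a) j = rvm n (\<lambda>y. rvm n p (A (s a) * B (t a)) y) ?F j"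
    unfolding FW_step[OF a] by (rule rvm_mult[OF mult_carrier_mat[OF Ac Bc] Fc j])
  also have "\<dots> = rvm n (\<lambda>y. \<Sum>q\<in>Q. (c (t a) q * bf n (A (s a)) p (v q)) * v q y) ?F j"
    by (rule rvm_cong) (rule rvm_AB[OF Ac Bc Bd[OF a]])
  also have "\<dots> = (\<Sum>q\<in>Q. (c (t a) q * bf n (A (s a)) p (v q)) * rvm n (v q) ?F j)"
    by (rule rvm_lin)
  also have "\<dots> = (\<Sum>q\<in>Q. \<Sum>g\<in>PiE {Suc a..<N} (\<lambda>_. Q). c (t a) q * bf n (A (s a)) p (v q) * X (v q) g)"
    by (simp add: IH sum_distrib_left)
  also have "\<dots> = (\<Sum>g\<in>PiE {a..<N} (\<lambda>_. Q). (\<Prod>k\<in>{a..<N}. c (t k) (g k)) *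
       (\<Prod>k\<in>{a..<Suc N}. bf n (A (s k)) (zz v N ?e p g a k) (zz v N ?e p g a (Suc k))))"
  proof -
    have ins: "{a..<N} = insert a {Suc a..<N}" using a by auto
    have "(\<Sum>g\<in>PiE {a..<N} (\<lambda>_. Q). (\<Prod>k\<in>{a..<N}. c (t k) (g k)) *
       (\<Prod>k\<in>{a..<Suc N}. bf n (A (s k)) (zz v N ?e p g a k) (zz v N ?e p g a (Suc k))))
      = (\<Sum>q\<in>Q. \<Sum>g\<in>PiE {Suc a..<N} (\<lambda>_. Q). (\<Prod>k\<in>{a..<N}. c (t k) ((g(a := q)) k)) *
       (\<Prod>k\<in>{a..<Suc N}. bf n (A (s k)) (zz v N ?e p (g(a := q)) a k) (zz v N ?e p (g(a := q)) a (Suc k))))"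
      unfolding ins by (rule sum_PiE_insert) simp
    also have "\<dots> = (\<Sum>q\<in>Q. \<Sum>g\<in>PiE {Suc a..<N} (\<lambda>_. Q). c (t a) q * bf n (A (s a)) p (v q) * X (v q) g)"
    proof (intro sum.cong refl)
      fix q g
      have p1: "(\<Prod>k\<in>{a..<N}. c (t k) ((g(a := q)) k)) = c (t a) q * (\<Prod>k\<in>{Suc a..<N}. c (t k) (g k))"
        unfolding ins by (subst prod.insert) (auto intro!: prod.cong)
      have ins2: "{a..<Suc N} = insert a {Suc a..<Suc N}" using a by auto
      have z1: "zz v N ?e p (g(a := q)) a a = p" by (simp add: zz_def)
      have z2: "zz v N ?e p (g(a := q)) a (Suc a) = v q" using a by (simp add: zz_def)
      have z3: "zz v N ?e p (g(a := q)) a k = zz v N ?e (v q) g (Suc a) k" if "k \<ge> Suc a" for k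
        using that a by (auto simp: zz_def)
      have p2: "(\<Prod>k\<in>{a..<Suc N}. bf n (A (s k)) (zz v N ?e p (g(a := q)) a k) (zz v N ?e p (g(a := q)) a (Suc k)))
         = bf n (A (s a)) p (v q) * (\<Prod>k\<in>{Suc a..<Suc N}. bf n (A (s k)) (zz v N ?e (v q) g (Suc a) k) (zz v N ?e (v q) g (Suc a) (Suc k)))"
        unfolding ins2 by (subst prod.insert) (auto simp: z1 z2 z3 intro!: prod.cong)
      show "(\<Prod>k\<in>{a..<N}. c (t k) ((g(a := q)) k)) *
       (\<Prod>k\<in>{a..<Suc N}. bf n (A (s k)) (zz v N ?e p (g(a := q)) a k) (zz v N ?e p (g(a := q)) a (Suc k)))
        = c (t a) q * bf n (A (s a)) p (v q) * X (v q) g"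
        unfolding p1 p2 X_def by (simp add: ac_simps)
    qed
    finally show ?thesis by simp
  qed
  finally show ?case .
qed



definition QQ :: "nat \<Rightarrow> (nat \<times> nat \<times> bool) set" where
  "QQ n = {0..<n} \<times> {0..<n} \<times> UNIV"

definition vv :: "nat \<times> nat \<times> bool \<Rightarrow> nat \<Rightarrow> complex" where
  "vv q x = (case q of (a,b,s) \<Rightarrow> (if x = a then 1 else 0) + (if s then 1 else -1) * (if x = b then 1 else 0))"

definition cc :: "complex mat \<Rightarrow> nat \<times> nat \<times> bool \<Rightarrow> complex" where
  "cc B q = (case q of (a,b,s) \<Rightarrow> (if s then 1 else -1) * B $$ (a,b) / 4)"

lemma sym_decomp:
  assumes B: "B \<in> carrier_mat n n" and Bs: "transpose_mat B = B" and x: "x < n" and y: "y < n"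
  shows "B $$ (x,y) = (\<Sum>q\<in>QQ n. cc B q * vv q x * vv q y)"
proof -
  have sym: "B $$ (y,x) = B $$ (x,y)"
  proof -
    have "transpose_mat B $$ (x,y) = B $$ (x,y)" by (simp only: Bs)
    thus ?thesis using B x y by simp
  qed
  have step: "(\<Sum>s\<in>UNIV. cc B (a,b,s) * vv (a,b,s) x * vv (a,b,s) y)
      = (if a = x then (if b = y then B $$ (a,b) / 2 else 0) else 0) + (if b = x then (if a = y then B $$ (a,b) / 2 else 0) else 0)"
    for a b
  proof -
    have "(\<Sum>s\<in>UNIV. cc B (a,b,s) * vv (a,b,s) x * vv (a,b,s) y)
        = cc B (a,b,True) * vv (a,b,True) x * vv (a,b,True) y + cc B (a,b,False) * vv (a,b,False) x * vv (a,b,False) y"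
      by (simp add: UNIV_bool)
    also have "\<dots> = (if a = x then (if b = y then B $$ (a,b) / 2 else 0) else 0) + (if b = x then (if a = y then B $$ (a,b) / 2 else 0) else 0)"
      by (cases "x = a"; cases "x = b"; cases "y = a"; cases "y = b"; simp add: cc_def vv_def field_simps)
    finally show ?thesis .
  qed
  have "(\<Sum>q\<in>QQ n. cc B q * vv q x * vv q y) = (\<Sum>a\<in>{0..<n}. \<Sum>b\<in>{0..<n}. \<Sum>s\<in>UNIV. cc B (a,b,s) * vv (a,b,s) x * vv (a,b,s) y)"
    unfolding QQ_def by (simp add: sum.cartesian_product)
  also have "\<dots> = (\<Sum>a\<in>{0..<n}. \<Sum>b\<in>{0..<n}. (if a = x then (if b = y then B $$ (a,b) / 2 else 0) else 0) + (if b = x then (if a = y then B $$ (a,b) / 2 else 0) else 0))"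
    by (simp only: step)
  also have "\<dots> = B $$ (x,y) / 2 + B $$ (y,x) / 2"
  proof -
    have d1: "(\<Sum>a\<in>{0..<n}. \<Sum>b\<in>{0..<n}. (if a = x then (if b = y then B $$ (a,b) / 2 else 0) else 0)) = B $$ (x,y) / 2"
    proof -
      have "(\<Sum>a\<in>{0..<n}. \<Sum>b\<in>{0..<n}. (if a = x then (if b = y then B $$ (a,b) / 2 else 0) else 0))
          = (\<Sum>a\<in>{0..<n}. (if a = x then B $$ (a,y) / 2 else 0))"
        by (rule sum.cong[OF refl]) (use y in auto)
      also have "\<dots> = B $$ (x,y) / 2" using x by simp
      finally show ?thesis .
    qed
    have d2: "(\<Sum>a\<in>{0..<n}. \<Sum>b\<in>{0..<n}. (if b = x then (if a = y then B $$ (a,b) / 2 else 0) else 0)) = B $$ (y,x) / 2"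
    proof -
      have "(\<Sum>a\<in>{0..<n}. \<Sum>b\<in>{0..<n}. (if b = x then (if a = y then B $$ (a,b) / 2 else 0) else 0))
          = (\<Sum>a\<in>{0..<n}. (if a = y then B $$ (a,x) / 2 else 0))"
        by (rule sum.cong[OF refl]) (use x in auto)
      also have "\<dots> = B $$ (y,x) / 2" using y by simp
      finally show ?thesis .
    qed
    show ?thesis unfolding sum.distrib d1 d2 ..
  qed
  also have "\<dots> = B $$ (x,y)" using sym by simp
  finally show ?thesis by simp
qed

definition cinv :: "nat \<Rightarrow> nat \<Rightarrow> nat" where
  "cinv n = (\<lambda>k. if k = 0 then n else if k \<le> n then k - 1 else k)"

lemma cinv_permutes: "cinv n permutes {0..<Suc n}"
  by (rule bij_imp_permutes, rule bij_betw_byWitness[where f'="cyc n"]) (auto simp: cinv_def cyc_def)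

lemma cyc_cinv: "cyc n \<circ> cinv n = id" by (rule ext) (auto simp: cinv_def cyc_def)
lemma cinv_cyc: "cinv n \<circ> cyc n = id" by (rule ext) (auto simp: cinv_def cyc_def)

definition conjT where "conjT n t = cyc n \<circ> t \<circ> cinv n"
definition unconjT where "unconjT n r = cinv n \<circ> r \<circ> cyc n"

lemma conjT_Tset: assumes t: "t permutes {0..<N}" shows "conjT (Suc N) t \<in> Tset (Suc N)"
proof -
  have t': "t permutes {0..<Suc (Suc N)}" by (rule permutes_subset[OF t]) auto
  have "conjT (Suc N) t permutes {0..<Suc (Suc N)}"
    unfolding conjT_def by (intro permutes_compose cinv_permutes cyc_permutes t')
  moreover have "t (Suc N) = Suc N" "t N = N" using t by (auto simp: permutes_def)
  ultimately show ?thesis by (simp add: Tset_def conjT_def cinv_def cyc_def)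
qed

lemma unconjT_perm: assumes r: "r \<in> Tset (Suc N)" shows "unconjT (Suc N) r permutes {0..<N}"
proof -
  have rp: "r permutes {0..<Suc (Suc N)}" and r0: "r 0 = 0" and rn: "r (Suc N) = Suc N"
    using r by (auto simp: Tset_def)
  have p: "unconjT (Suc N) r permutes {0..<Suc (Suc N)}"
    unfolding unconjT_def by (intro permutes_compose cinv_permutes cyc_permutes rp)
  show ?thesis
  proof (rule permutes_superset[OF p])
    fix x assume "x \<in> {0..<Suc (Suc N)} - {0..<N}"
    hence "x = N \<or> x = Suc N" by auto
    thus "unconjT (Suc N) r x = x" using r0 rn by (auto simp: unconjT_def cinv_def cyc_def)
  qed
qed

lemma conj_unconj: "conjT n (unconjT n r) = r"
  unfolding conjT_def unconjT_def by (simp add: comp_assoc cyc_cinv) (simp add: comp_assoc[symmetric] cyc_cinv)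

lemma unconj_conj: "unconjT n (conjT n t) = t"
  unfolding conjT_def unconjT_def by (simp add: comp_assoc cinv_cyc) (simp add: comp_assoc[symmetric] cinv_cyc)

lemma sign_conjT: assumes t: "t permutes {0..<N}" shows "sign (conjT (Suc N) t) = sign t"
proof -
  have pt: "permutation t" using t by (auto simp: permutation_permutes)
  have pc: "permutation (cyc (Suc N))" using cyc_permutes by (auto simp: permutation_permutes)
  have pi: "permutation (cinv (Suc N))" using cinv_permutes by (auto simp: permutation_permutes)
  have "sign (cyc (Suc N)) * sign (cinv (Suc N)) = 1"
    using sign_compose[OF pc pi] cyc_cinv[of "Suc N"] by simp
  moreover have "sign (conjT (Suc N) t) = sign (cyc (Suc N)) * sign t * sign (cinv (Suc N))"
    unfolding conjT_def by (simp add: sign_compose permutation_compose pc pt pi)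
  ultimately show ?thesis by (metis mult.commute mult.left_commute mult_1_right)
qed

lemma conjT_vals: assumes t: "t permutes {0..<N}"
  shows "conjT (Suc N) t 0 = 0" "k \<ge> 1 \<Longrightarrow> k \<le> N \<Longrightarrow> conjT (Suc N) t k = Suc (t (k - 1))"
    "conjT (Suc N) t (Suc N) = Suc N" "k \<ge> 1 \<Longrightarrow> k \<le> N \<Longrightarrow> t (k - 1) < N"
proof -
  have tN: "t (Suc N) = Suc N" "t N = N" using t by (auto simp: permutes_def)
  show "conjT (Suc N) t 0 = 0" using tN by (simp add: conjT_def cinv_def cyc_def)
  show "conjT (Suc N) t (Suc N) = Suc N" using tN by (simp add: conjT_def cinv_def cyc_def)
  assume k: "k \<ge> 1" "k \<le> N"
  show tk: "t (k - 1) < N" using permutes_in_image[OF t, of "k - 1"] k by simp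
  show "conjT (Suc N) t k = Suc (t (k - 1))" using k tk by (simp add: conjT_def cinv_def cyc_def)
qed

lemma zz_conj: assumes t: "t permutes {0..<N}" and k: "k \<le> Suc N"
  shows "zz v N e p (h \<circ> t) 0 k = zz v N e p h 0 (conjT (Suc N) t k)"
proof -
  consider "k = 0" | "k \<ge> 1 \<and> k \<le> N" | "k = Suc N" using k by linarith
  thus ?thesis
  proof cases
    case 1 thus ?thesis using conjT_vals[OF t] by (simp add: zz_def)
  next
    case 2
    thus ?thesis using conjT_vals(2)[OF t, of k] conjT_vals(4)[OF t, of k] by (simp add: zz_def)
  next
    case 3 thus ?thesis using conjT_vals[OF t] by (simp add: zz_def)
  qed
qed



theorem theorem5p1:
  fixes n :: nat and A B :: "nat \<Rightarrow> complex mat"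
  assumes "n \<ge> 1"
    and "\<And>k. k < n \<Longrightarrow> A k \<in> carrier_mat n n \<and> alternating_mat (A k)"
    and "\<And>k. k < n - 1 \<Longrightarrow> B k \<in> carrier_mat n n \<and> symmetric_mat (B k)"
    and "i < n" and "j < n"
  shows "(\<Sum>\<sigma>\<in>{\<sigma>. \<sigma> permutes {0..<n}}. \<Sum>\<tau>\<in>{\<tau>. \<tau> permutes {0..<n-1}}.
            of_int (sign \<sigma> * sign \<tau>) * alt_word A B \<sigma> \<tau> n $$ (i, j)) = 0"
proof -
  obtain N where nN: "n = Suc N" using assms(1) by (cases n) auto
  have N: "n - 1 = N" using nN by simp
  have Ac: "\<And>k. k < n \<Longrightarrow> A k \<in> carrier_mat n n" and At: "\<And>k. k < n \<Longrightarrow> transpose_mat (A k) = - A k"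
    using assms(2) by (auto simp: alternating_mat_def)
  have Bc: "\<And>k. k < N \<Longrightarrow> B k \<in> carrier_mat n n" and Bt: "\<And>k. k < N \<Longrightarrow> transpose_mat (B k) = B k"
    using assms(3) N by (auto simp: symmetric_mat_def)
  let ?ei = "\<lambda>x::nat. if x = i then (1::complex) else 0"
  let ?ej = "\<lambda>x::nat. if x = j then (1::complex) else 0"
  let ?c = "\<lambda>l. cc (B l)"
  let ?W = "\<lambda>g. zz vv N ?ej ?ei g 0"
  let ?P = "{\<sigma>. \<sigma> permutes {0..<n}}"
  let ?T = "{\<tau>. \<tau> permutes {0..<N}}"
  let ?G = "PiE {0..<N} (\<lambda>_. QQ n)"
  define X where "X \<tau> g = (\<Prod>k\<in>{0..<N}. ?c (\<tau> k) (g k))" for \<tau> g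
  define Y where "Y \<sigma> g = (\<Prod>k\<in>{0..<n}. bf n (A (\<sigma> k)) (?W g k) (?W g (Suc k)))" for \<sigma> g
  define Mg where "Mg g = mat n n (\<lambda>(k,m). bf n (A m) (?W g k) (?W g (Suc k)))" for g
  have entry: "alt_word A B \<sigma> \<tau> n $$ (i,j) = (\<Sum>g\<in>?G. X \<tau> g * Y \<sigma> g)"
    if \<sigma>: "\<sigma> \<in> ?P" and \<tau>: "\<tau> \<in> ?T" for \<sigma> \<tau>
  proof -
    have sp: "\<sigma> permutes {0..<n}" and tp: "\<tau> permutes {0..<N}" using \<sigma> \<tau> by auto
    have "alt_word A B \<sigma> \<tau> n = FW A B \<sigma> \<tau> N 0" by (simp add: alt_word_def FW_def nN)
    moreover have "rvm n ?ei (FW A B \<sigma> \<tau> N 0) j = (\<Sum>x<n. if x = i then FW A B \<sigma> \<tau> N 0 $$ (x,j) else 0)"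
      unfolding rvm_def by (rule sum.cong) auto
    ultimately have "alt_word A B \<sigma> \<tau> n $$ (i,j) = rvm n ?ei (FW A B \<sigma> \<tau> N 0) j"
      using assms(4) by simp
    also have "\<dots> = (\<Sum>g\<in>?G. (\<Prod>k\<in>{0..<N}. ?c (\<tau> k) (g k)) *
       (\<Prod>k\<in>{0..<Suc N}. bf n (A (\<sigma> k)) (?W g k) (?W g (Suc k))))"
    proof (rule FW_expand)
      show "A (\<sigma> k) \<in> carrier_mat n n" if "k \<le> N" for k
        using Ac permutes_in_image[OF sp, of k] that nN by simp
      show "B (\<tau> k) \<in> carrier_mat n n" if "k < N" for k
        using Bc permutes_in_image[OF tp, of k] that by simp
      show "B (\<tau> k) $$ (x,y) = (\<Sum>q\<in>QQ n. ?c (\<tau> k) q * vv q x * vv q y)" if "k < N" "x < n" "y < n" for k x y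
        using permutes_in_image[OF tp, of k] that by (intro sym_decomp[OF Bc Bt]) auto
    qed (use assms(5) in auto)
    finally show ?thesis by (simp add: X_def Y_def nN)
  qed
  have detY: "(\<Sum>\<sigma>\<in>?P. of_int (sign \<sigma>) * Y \<sigma> g) = det (Mg g)" for g
  proof -
    have C: "Mg g \<in> carrier_mat n n" by (simp add: Mg_def)
    show ?thesis unfolding det_def'[OF C]
    proof (rule sum.cong[OF refl])
      fix \<sigma> assume "\<sigma> \<in> ?P"
      hence sp: "\<sigma> permutes {0..<n}" by simp
      show "of_int (sign \<sigma>) * Y \<sigma> g = signof \<sigma> * (\<Prod>k = 0..<n. Mg g $$ (k, \<sigma> k))"
        unfolding Y_def using permutes_in_image[OF sp] by (simp add: Mg_def)
    qed
  qed
  have fin: "finite ?P" "finite ?T" "finite ?G"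
    by (auto simp: finite_permutations finite_PiE QQ_def)
  have "(\<Sum>\<sigma>\<in>?P. \<Sum>\<tau>\<in>{\<tau>. \<tau> permutes {0..<n-1}}. of_int (sign \<sigma> * sign \<tau>) * alt_word A B \<sigma> \<tau> n $$ (i, j))
      = (\<Sum>\<sigma>\<in>?P. \<Sum>\<tau>\<in>?T. \<Sum>g\<in>?G. of_int (sign \<tau>) * X \<tau> g * (of_int (sign \<sigma>) * Y \<sigma> g))"
    unfolding N by (intro sum.cong refl) (simp add: entry sum_distrib_left ac_simps)
  also have "\<dots> = (\<Sum>\<tau>\<in>?T. \<Sum>\<sigma>\<in>?P. \<Sum>g\<in>?G. of_int (sign \<tau>) * X \<tau> g * (of_int (sign \<sigma>) * Y \<sigma> g))"
    by (rule sum.swap)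
  also have "\<dots> = (\<Sum>\<tau>\<in>?T. \<Sum>g\<in>?G. \<Sum>\<sigma>\<in>?P. of_int (sign \<tau>) * X \<tau> g * (of_int (sign \<sigma>) * Y \<sigma> g))"
    by (intro sum.cong refl sum.swap)
  also have "\<dots> = (\<Sum>\<tau>\<in>?T. of_int (sign \<tau>) * (\<Sum>g\<in>?G. X \<tau> g * det (Mg g)))"
  proof (rule sum.cong[OF refl])
    fix \<tau>
    have "(\<Sum>g\<in>?G. \<Sum>\<sigma>\<in>?P. of_int (sign \<tau>) * X \<tau> g * (of_int (sign \<sigma>) * Y \<sigma> g))
        = (\<Sum>g\<in>?G. of_int (sign \<tau>) * X \<tau> g * (\<Sum>\<sigma>\<in>?P. of_int (sign \<sigma>) * Y \<sigma> g))"
      by (simp add: sum_distrib_left)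
    also have "\<dots> = of_int (sign \<tau>) * (\<Sum>g\<in>?G. X \<tau> g * det (Mg g))"
      by (simp add: detY sum_distrib_left mult.assoc)
    finally show "(\<Sum>g\<in>?G. \<Sum>\<sigma>\<in>?P. of_int (sign \<tau>) * X \<tau> g * (of_int (sign \<sigma>) * Y \<sigma> g))
        = of_int (sign \<tau>) * (\<Sum>g\<in>?G. X \<tau> g * det (Mg g))" .
  qed
  also have "\<dots> = (\<Sum>\<tau>\<in>?T. of_int (sign \<tau>) *
        (\<Sum>h\<in>?G. (\<Prod>l\<in>{0..<N}. ?c l (h l)) * det (CoreM n A (?W h) (conjT n \<tau>))))"
  proof (rule sum.cong[OF refl])
    fix \<tau> assume "\<tau> \<in> ?T"
    hence tp: "\<tau> permutes {0..<N}" by simp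
    have itp: "Hilbert_Choice.inv \<tau> permutes {0..<N}" by (rule permutes_inv[OF tp])
    have "(\<Sum>h\<in>?G. (\<Prod>l\<in>{0..<N}. ?c l (h l)) * det (CoreM n A (?W h) (conjT n \<tau>))) = (\<Sum>g\<in>?G. X \<tau> g * det (Mg g))"
    proof (rule sum.reindex_bij_witness[where j="\<lambda>h. h \<circ> \<tau>" and i="\<lambda>g. g \<circ> Hilbert_Choice.inv \<tau>"])
      fix h assume h: "h \<in> ?G"
      show "h \<circ> \<tau> \<circ> Hilbert_Choice.inv \<tau> = h" by (rule ext) (simp add: permutes_inverses(1)[OF tp])
      show "h \<circ> \<tau> \<in> ?G"
        using h permutes_in_image[OF tp] tp by (auto simp: PiE_iff extensional_def permutes_def)
      have "X \<tau> (h \<circ> \<tau>) = (\<Prod>l\<in>{0..<N}. ?c l (h l))"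
        unfolding X_def using prod.permute[OF tp, of "\<lambda>l. ?c l (h l)"] by (simp add: o_def)
      moreover have "Mg (h \<circ> \<tau>) = CoreM n A (?W h) (conjT n \<tau>)"
      proof (rule eq_matI)
        fix k m assume "k < dim_row (CoreM n A (?W h) (conjT n \<tau>))" "m < dim_col (CoreM n A (?W h) (conjT n \<tau>))"
        hence k: "k < n" and m: "m < n" by (auto simp: CoreM_def)
        have "?W (h \<circ> \<tau>) k = ?W h (conjT n \<tau> k)" using zz_conj[OF tp, of k] k nN by simp
        moreover have "?W (h \<circ> \<tau>) (Suc k) = ?W h (conjT n \<tau> (Suc k))" using zz_conj[OF tp, of "Suc k"] k nN by simp
        ultimately show "Mg (h \<circ> \<tau>) $$ (k, m) = CoreM n A (?W h) (conjT n \<tau>) $$ (k, m)"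
          using k m by (simp add: Mg_def CoreM_def)
      qed (auto simp: Mg_def CoreM_def)
      ultimately show "X \<tau> (h \<circ> \<tau>) * det (Mg (h \<circ> \<tau>)) = (\<Prod>l\<in>{0..<N}. ?c l (h l)) * det (CoreM n A (?W h) (conjT n \<tau>))"
        by simp
    next
      fix g assume g: "g \<in> ?G"
      show "g \<circ> Hilbert_Choice.inv \<tau> \<circ> \<tau> = g" by (rule ext) (simp add: permutes_inverses(2)[OF tp])
      show "g \<circ> Hilbert_Choice.inv \<tau> \<in> ?G"
        using g permutes_in_image[OF itp] itp by (auto simp: PiE_iff extensional_def permutes_def)
    qed
    thus "of_int (sign \<tau>) * (\<Sum>g\<in>?G. X \<tau> g * det (Mg g)) = of_int (sign \<tau>) *
        (\<Sum>h\<in>?G. (\<Prod>l\<in>{0..<N}. ?c l (h l)) * det (CoreM n A (?W h) (conjT n \<tau>)))" by simp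
  qed
  also have "\<dots> = (\<Sum>h\<in>?G. (\<Prod>l\<in>{0..<N}. ?c l (h l)) *
        (\<Sum>\<tau>\<in>?T. of_int (sign \<tau>) * det (CoreM n A (?W h) (conjT n \<tau>))))"
    by (simp add: sum_distrib_left sum.swap[of _ ?T] ac_simps)
  also have "\<dots> = (\<Sum>h\<in>?G. (\<Prod>l\<in>{0..<N}. ?c l (h l)) * Core n A (?W h))"
  proof (rule sum.cong[OF refl])
    fix h
    have "(\<Sum>\<tau>\<in>?T. of_int (sign \<tau>) * det (CoreM n A (?W h) (conjT n \<tau>))) = Core n A (?W h)"
      unfolding Core_def
    proof (rule sum.reindex_bij_witness[where j="conjT n" and i="unconjT n"])
      fix \<tau> assume "\<tau> \<in> ?T"
      hence tp: "\<tau> permutes {0..<N}" by simp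
      show "unconjT n (conjT n \<tau>) = \<tau>" by (rule unconj_conj)
      show "conjT n \<tau> \<in> Tset n" using conjT_Tset[OF tp] nN by simp
      show "of_int (sign (conjT n \<tau>)) * det (CoreM n A (?W h) (conjT n \<tau>)) = of_int (sign \<tau>) * det (CoreM n A (?W h) (conjT n \<tau>))"
        using sign_conjT[OF tp] nN by simp
    next
      fix r assume "r \<in> Tset n"
      hence r: "r \<in> Tset (Suc N)" using nN by simp
      show "conjT n (unconjT n r) = r" by (rule conj_unconj)
      show "unconjT n r \<in> ?T" using unconjT_perm[OF r] nN by simp
    qed
    thus "(\<Prod>l\<in>{0..<N}. ?c l (h l)) * (\<Sum>\<tau>\<in>?T. of_int (sign \<tau>) * det (CoreM n A (?W h) (conjT n \<tau>)))
        = (\<Prod>l\<in>{0..<N}. ?c l (h l)) * Core n A (?W h)" by simp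
  qed
  also have "\<dots> = 0" using Core_zero[OF assms(1) Ac At] by simp
  finally show ?thesis .
qed

end
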